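(* Let $\mathbf{B}$ be a 2-element algebra with universe $\{0,1\}$ such that $\mathrm{Clo}(\mathbf{B})=\mathsf{U}$, and let $\mathbf{A}=\mathbf{B}^n$. Then any algorithm (classical or quantum) solving $\mathrm{HKP}(\mathbf{A})$ must make $\Omega(2^n)$ queries to the oracle.
   Context: $\mathrm{Clo}(\mathbf{B})$ is the clone of term operations of $\mathbf{B}$ (smallest set of operations on $\{0,1\}$ containing the basic operations and projections, closed under composition). $\mathsf{U}$ is the clone generated by $\neg x$ and the constant $0$. $\mathbf{B}^n$ is the direct power with coordinatewise operations. A congruence is an equivalence relation compatible with all operations; $\ker(\phi)=\{(a,b):\phi(a)=\phi(b)\}$. The Hidden Kernel Problem $\mathrm{HKP}(\mathbf{A})$: given a similar algebra $\mathbf{C}$ and a homomorphism $\phi:\mathbf{A}\to\mathbf{C}$ accessible only as an oracle, determine the congruence $\ker(\phi)$. *)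

theory Defs
  imports "HOL-Probability.Probability_Mass_Function"
begin

text \<open>A signature is given by an index type 'i and an arity function ar.
  An algebra of this signature with elements of type 'a is a carrier set
  together with a family of operations 'i => 'a list => 'a (operation s is
  only meaningful on argument lists of length ar s).\<close>

definition is_algebra :: "('i \<Rightarrow> nat) \<Rightarrow> 'a set \<Rightarrow> ('i \<Rightarrow> 'a list \<Rightarrow> 'a) \<Rightarrow> bool" where
  "is_algebra ar C opC \<longleftrightarrow> C \<noteq> {} \<and>
     (\<forall>s cs. length cs = ar s \<and> set cs \<subseteq> C \<longrightarrow> opC s cs \<in> C)"

definition alg_hom :: "('i \<Rightarrow> nat) \<Rightarrow> 'a set \<Rightarrow> ('i \<Rightarrow> 'a list \<Rightarrow> 'a)
     \<Rightarrow> 'c set \<Rightarrow> ('i \<Rightarrow> 'c list \<Rightarrow> 'c) \<Rightarrow> ('a \<Rightarrow> 'c) \<Rightarrow> bool" where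
  "alg_hom ar A opA C opC \<phi> \<longleftrightarrow> (\<forall>a\<in>A. \<phi> a \<in> C) \<and>
     (\<forall>s as. length as = ar s \<and> set as \<subseteq> A \<longrightarrow> \<phi> (opA s as) = opC s (map \<phi> as))"

definition ker_on :: "'a set \<Rightarrow> ('a \<Rightarrow> 'c) \<Rightarrow> ('a \<times> 'a) set" where
  "ker_on A \<phi> = {(a, b). a \<in> A \<and> b \<in> A \<and> \<phi> a = \<phi> b}"

section \<open>Clones on {0,1} (0 = False, 1 = True)\<close>

text \<open>Operations on {0,1} are functions bool list => bool; a k-ary operation
  is only considered on argument lists of length k.  in_clone F k f: f is a
  k-ary operation of the clone generated by the set F of (arity, operation)
  pairs, built from projections by composition with members of F.\<close>

inductive in_clone :: "(nat \<times> (bool list \<Rightarrow> bool)) set \<Rightarrow> nat \<Rightarrow> (bool list \<Rightarrow> bool) \<Rightarrow> bool"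
  for F :: "(nat \<times> (bool list \<Rightarrow> bool)) set" where
  proj: "i < k \<Longrightarrow> in_clone F k (\<lambda>xs. xs ! i)"
| comp: "(m, g) \<in> F \<Longrightarrow> length hs = m \<Longrightarrow> (\<forall>h\<in>set hs. in_clone F k h)
         \<Longrightarrow> in_clone F k (\<lambda>xs. g (map (\<lambda>h. h xs) hs))"

definition clone_part :: "(nat \<times> (bool list \<Rightarrow> bool)) set \<Rightarrow> nat \<Rightarrow> (bool list \<Rightarrow> bool) set" where
  "clone_part F k = {f. \<exists>g. in_clone F k g \<and> (\<forall>xs. length xs = k \<longrightarrow> f xs = g xs)}"

definition basic_ops :: "('i \<Rightarrow> nat) \<Rightarrow> ('i \<Rightarrow> bool list \<Rightarrow> bool) \<Rightarrow> (nat \<times> (bool list \<Rightarrow> bool)) set" where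
  "basic_ops ar opB = range (\<lambda>s. (ar s, opB s))"

definition U_gens :: "(nat \<times> (bool list \<Rightarrow> bool)) set" where
  "U_gens = {(1, \<lambda>xs. \<not> hd xs), (1, \<lambda>xs. False)}"

text \<open>Clo(B) = U, compared in all positive arities.\<close>
definition Clo_eq_U :: "('i \<Rightarrow> nat) \<Rightarrow> ('i \<Rightarrow> bool list \<Rightarrow> bool) \<Rightarrow> bool" where
  "Clo_eq_U ar opB \<longleftrightarrow> (\<forall>k\<ge>1. clone_part (basic_ops ar opB) k = clone_part U_gens k)"

definition pow_carrier :: "nat \<Rightarrow> bool list set" where
  "pow_carrier n = {xs. length xs = n}"

definition pow_ops :: "nat \<Rightarrow> ('i \<Rightarrow> bool list \<Rightarrow> bool) \<Rightarrow> 'i \<Rightarrow> bool list list \<Rightarrow> bool list" where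
  "pow_ops n opB s vs = map (\<lambda>j. opB s (map (\<lambda>v. v ! j) vs)) [0..<n]"

text \<open>Instances of HKP(B^n) whose target algebra C has its elements encoded
  by natural numbers below M (C given by carrier and operations).\<close>
definition hkp_instance :: "('i \<Rightarrow> nat) \<Rightarrow> ('i \<Rightarrow> bool list \<Rightarrow> bool) \<Rightarrow> nat \<Rightarrow> nat
     \<Rightarrow> nat set \<Rightarrow> ('i \<Rightarrow> nat list \<Rightarrow> nat) \<Rightarrow> (bool list \<Rightarrow> nat) \<Rightarrow> bool" where
  "hkp_instance ar opB n M C opC \<phi> \<longleftrightarrow> C \<subseteq> {..<M} \<and> is_algebra ar C opC \<and>
     alg_hom ar (pow_carrier n) (pow_ops n opB) C opC \<phi>"

datatype dtree = Leaf "(bool list \<times> bool list) set" | Query "bool list" "nat \<Rightarrow> dtree"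

primrec run_tree :: "(bool list \<Rightarrow> nat) \<Rightarrow> dtree \<Rightarrow> (bool list \<times> bool list) set" where
  "run_tree \<phi> (Leaf r) = r"
| "run_tree \<phi> (Query a t) = run_tree \<phi> (t (\<phi> a))"

primrec nqueries :: "(bool list \<Rightarrow> nat) \<Rightarrow> dtree \<Rightarrow> nat" where
  "nqueries \<phi> (Leaf r) = 0"
| "nqueries \<phi> (Query a t) = Suc (nqueries \<phi> (t (\<phi> a)))"

text \<open>A randomized classical algorithm (a probability distribution over
  decision trees, which may depend on the given algebra C) solves HKP(B^n)
  with at most q queries and success probability at least 2/3.\<close>
definition solves_hkp_classical :: "('i \<Rightarrow> nat) \<Rightarrow> ('i \<Rightarrow> bool list \<Rightarrow> bool) \<Rightarrow> nat \<Rightarrow> nat \<Rightarrow> nat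
     \<Rightarrow> (nat set \<Rightarrow> ('i \<Rightarrow> nat list \<Rightarrow> nat) \<Rightarrow> dtree pmf) \<Rightarrow> bool" where
  "solves_hkp_classical ar opB n M q R \<longleftrightarrow>
     (\<forall>C opC \<phi>. hkp_instance ar opB n M C opC \<phi> \<longrightarrow>
        (\<forall>t\<in>set_pmf (R C opC). nqueries \<phi> t \<le> q) \<and>
        measure_pmf.prob (R C opC) {t. run_tree \<phi> t = ker_on (pow_carrier n) \<phi>} \<ge> 2/3)"

text \<open>Basis states: (query input a in A, answer register y < M, workspace w < d).
  States are complex amplitude functions on the basis; operators are kernels
  K i j (matrix entries) on the finite basis.\<close>
type_synonym qbasis = "bool list \<times> nat \<times> nat"

definition qbasis_set :: "nat \<Rightarrow> nat \<Rightarrow> nat \<Rightarrow> qbasis set" where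
  "qbasis_set n M d = pow_carrier n \<times> {..<M} \<times> {..<d}"

definition unitary_on :: "qbasis set \<Rightarrow> (qbasis \<Rightarrow> qbasis \<Rightarrow> complex) \<Rightarrow> bool" where
  "unitary_on S K \<longleftrightarrow> (\<forall>i\<in>S. \<forall>j\<in>S. (\<Sum>k\<in>S. cnj (K k i) * K k j) = (if i = j then 1 else 0))"

definition apply_op :: "qbasis set \<Rightarrow> (qbasis \<Rightarrow> qbasis \<Rightarrow> complex) \<Rightarrow> (qbasis \<Rightarrow> complex) \<Rightarrow> (qbasis \<Rightarrow> complex)" where
  "apply_op S K \<psi> = (\<lambda>i. if i \<in> S then (\<Sum>j\<in>S. K i j * \<psi> j) else 0)"

text \<open>The query operator: |a, y, w> maps to |a, (y + phi a) mod M, w>.\<close>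
definition query_op :: "nat \<Rightarrow> (bool list \<Rightarrow> nat) \<Rightarrow> (qbasis \<Rightarrow> complex) \<Rightarrow> (qbasis \<Rightarrow> complex)" where
  "query_op M \<phi> \<psi> = (\<lambda>(a, y, w). \<psi> (a, (y + (M - \<phi> a mod M)) mod M, w))"

text \<open>qrun [U0, U1, ..., Uq] psi = Uq O ... U1 O U0 psi  (q oracle calls).\<close>
fun qrun :: "qbasis set \<Rightarrow> nat \<Rightarrow> (bool list \<Rightarrow> nat) \<Rightarrow> (qbasis \<Rightarrow> qbasis \<Rightarrow> complex) list
     \<Rightarrow> (qbasis \<Rightarrow> complex) \<Rightarrow> (qbasis \<Rightarrow> complex)" where
  "qrun S M \<phi> [] \<psi> = \<psi>"
| "qrun S M \<phi> [U] \<psi> = apply_op S U \<psi>"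
| "qrun S M \<phi> (U # V # Us) \<psi> = qrun S M \<phi> (V # Us) (query_op M \<phi> (apply_op S U \<psi>))"

definition init_state :: "nat \<Rightarrow> qbasis \<Rightarrow> complex" where
  "init_state n = (\<lambda>s. if s = (replicate n False, 0, 0) then 1 else 0)"

text \<open>A quantum query algorithm: workspace dimension d (at least 1), a list of
  q+1 unitaries, and an output assigned to each measured basis state.\<close>
type_synonym qalg = "nat \<times> (qbasis \<Rightarrow> qbasis \<Rightarrow> complex) list \<times> (qbasis \<Rightarrow> (bool list \<times> bool list) set)"

definition qalg_wf :: "nat \<Rightarrow> nat \<Rightarrow> nat \<Rightarrow> qalg \<Rightarrow> bool" where
  "qalg_wf n M q Q = (case Q of (d, Us, out) \<Rightarrow>
     d \<ge> 1 \<and> length Us = Suc q \<and> (\<forall>U\<in>set Us. unitary_on (qbasis_set n M d) U))"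

definition qsuccess :: "nat \<Rightarrow> nat \<Rightarrow> qalg \<Rightarrow> (bool list \<Rightarrow> nat) \<Rightarrow> (bool list \<times> bool list) set \<Rightarrow> real" where
  "qsuccess n M Q \<phi> target = (case Q of (d, Us, out) \<Rightarrow>
     (let S = qbasis_set n M d; \<psi> = qrun S M \<phi> Us (init_state n)
      in \<Sum>s\<in>{s\<in>S. out s = target}. (cmod (\<psi> s))\<^sup>2))"

definition solves_hkp_quantum :: "('i \<Rightarrow> nat) \<Rightarrow> ('i \<Rightarrow> bool list \<Rightarrow> bool) \<Rightarrow> nat \<Rightarrow> nat \<Rightarrow> nat
     \<Rightarrow> (nat set \<Rightarrow> ('i \<Rightarrow> nat list \<Rightarrow> nat) \<Rightarrow> qalg) \<Rightarrow> bool" where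
  "solves_hkp_quantum ar opB n M q Q \<longleftrightarrow>
     (\<forall>C opC \<phi>. hkp_instance ar opB n M C opC \<phi> \<longrightarrow>
        qalg_wf n M q (Q C opC) \<and>
        qsuccess n M (Q C opC) \<phi> (ker_on (pow_carrier n) \<phi>) \<ge> 2/3)"

end

theory Submission
  imports Defs "HOL-Analysis.Convex"
begin

definition uform :: "nat \<Rightarrow> (bool list \<Rightarrow> bool) \<Rightarrow> bool" where
  "uform k g \<longleftrightarrow> (\<exists>i<k. \<forall>l. length l = k \<longrightarrow> g l = l ! i) \<or>
                  (\<exists>i<k. \<forall>l. length l = k \<longrightarrow> g l = (\<not> l ! i)) \<or>
                  (\<exists>b. \<forall>l. length l = k \<longrightarrow> g l = b)"

lemma in_clone_U: "in_clone U_gens k g \<Longrightarrow> uform k g"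
proof (induction rule: in_clone.induct)
  case (proj i k)
  then show ?case unfolding uform_def by blast
next
  case (comp m g hs k)
  from comp.hyps(1) have "(m = 1 \<and> g = (\<lambda>xs. \<not> hd xs)) \<or> (m = 1 \<and> g = (\<lambda>xs. False))"
    unfolding U_gens_def by auto
  then show ?case
  proof
    assume h: "m = 1 \<and> g = (\<lambda>xs. \<not> hd xs)"
    then obtain h0 where hs: "hs = [h0]" using comp.hyps(2)
      by (metis One_nat_def length_0_conv length_Suc_conv)
    have "uform k h0" using comp.IH hs by auto
    then show ?case using h hs unfolding uform_def by auto
  next
    assume "m = 1 \<and> g = (\<lambda>xs. False)"
    then show ?case unfolding uform_def by auto
  qed
qed

lemma basic_uform:
  assumes "Clo_eq_U ar opB"
  shows "uform (ar s) (opB s)"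
proof (cases "ar s = 0")
  case True
  then show ?thesis unfolding uform_def by (metis length_0_conv)
next
  case False
  let ?k = "ar s"
  let ?hs = "map (\<lambda>i xs. xs ! i) [0..<?k]"
  have "in_clone (basic_ops ar opB) ?k (\<lambda>xs. opB s (map (\<lambda>h. h xs) ?hs))"
    by (rule in_clone.comp[where m = "ar s"]) (auto simp: basic_ops_def intro: in_clone.proj)
  moreover have "\<forall>xs. length xs = ?k \<longrightarrow> opB s xs = opB s (map (\<lambda>h. h xs) ?hs)"
    by (auto simp: map_nth[symmetric] comp_def intro!: arg_cong[where f="opB s"] nth_equalityI)
  ultimately have "opB s \<in> clone_part (basic_ops ar opB) ?k" unfolding clone_part_def by blast
  then have "opB s \<in> clone_part U_gens ?k" using assms False unfolding Clo_eq_U_def by auto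
  then obtain g where g: "in_clone U_gens ?k g" "\<forall>xs. length xs = ?k \<longrightarrow> opB s xs = g xs"
    unfolding clone_part_def by blast
  from in_clone_U[OF g(1)] g(2) show ?thesis unfolding uform_def by auto
qed

definition goodx :: "nat \<Rightarrow> (bool list \<Rightarrow> bool) \<Rightarrow> bool" where
  "goodx n x \<longleftrightarrow> (\<forall>a. x a \<longrightarrow> a \<in> pow_carrier n) \<and> \<not> x (replicate n False) \<and>
      (\<forall>a\<in>pow_carrier n. x (map Not a) = (\<not> x a))"

definition opC2 :: "('i \<Rightarrow> bool list \<Rightarrow> bool) \<Rightarrow> 'i \<Rightarrow> nat list \<Rightarrow> nat" where
  "opC2 opB s cs = of_bool (opB s (map (\<lambda>c. c = 1) cs))"

definition phix :: "(bool list \<Rightarrow> bool) \<Rightarrow> bool list \<Rightarrow> nat" where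
  "phix x a = of_bool (x a)"

lemma pow_ops_proj:
  assumes "\<forall>l. length l = k \<longrightarrow> g l = l ! i" "length vs = k" "i < k" "set vs \<subseteq> pow_carrier n"
  shows "map (\<lambda>j. g (map (\<lambda>v. v ! j) vs)) [0..<n] = vs ! i"
proof -
  have "length (vs ! i) = n" using assms(2-4) nth_mem unfolding pow_carrier_def by fastforce
  then show ?thesis using assms by (auto intro!: nth_equalityI)
qed

lemma pow_ops_neg:
  assumes "\<forall>l. length l = k \<longrightarrow> g l = (\<not> l ! i)" "length vs = k" "i < k" "set vs \<subseteq> pow_carrier n"
  shows "map (\<lambda>j. g (map (\<lambda>v. v ! j) vs)) [0..<n] = map Not (vs ! i)"
proof -
  have "length (vs ! i) = n" using assms(2-4) nth_mem unfolding pow_carrier_def by fastforce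
  then show ?thesis using assms by (auto intro!: nth_equalityI)
qed

lemma pow_ops_const:
  assumes "\<forall>l. length l = k \<longrightarrow> g l = b" "length vs = k"
  shows "map (\<lambda>j. g (map (\<lambda>v. v ! j) vs)) [0..<n] = replicate n b"
  using assms by (auto intro!: nth_equalityI)

lemma goodx_True: "goodx n x \<Longrightarrow> x (replicate n True)"
proof -
  assume g: "goodx n x"
  have "replicate n False \<in> pow_carrier n" by (simp add: pow_carrier_def)
  then have "x (map Not (replicate n False)) = (\<not> x (replicate n False))" using g unfolding goodx_def by blast
  then show ?thesis using g unfolding goodx_def by simp
qed

lemma instance_ok:
  assumes U: "Clo_eq_U ar opB" and g: "goodx n x" and M: "M \<ge> 2"
  shows "hkp_instance ar opB n M {0,1} (opC2 opB) (phix x)"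
  unfolding hkp_instance_def
proof (intro conjI)
  show "{0, 1} \<subseteq> {..<M}" using M by auto
  show "is_algebra ar {0, 1} (opC2 opB)" unfolding is_algebra_def opC2_def by auto
  show "alg_hom ar (pow_carrier n) (pow_ops n opB) {0, 1} (opC2 opB) (phix x)"
    unfolding alg_hom_def
  proof (intro conjI allI impI ballI)
    fix a show "phix x a \<in> {0,1}" unfolding phix_def by auto
  next
    fix s vs assume h: "length vs = ar s \<and> set vs \<subseteq> pow_carrier n"
    have mp: "map (\<lambda>c. c = 1) (map (phix x) vs) = map x vs" by (auto simp: phix_def)
    have "x (pow_ops n opB s vs) = opB s (map x vs)"
      using basic_uform[OF U, of s] unfolding uform_def
    proof (elim disjE exE conjE)
      fix i assume i: "i < ar s" and e: "\<forall>l. length l = ar s \<longrightarrow> opB s l = l ! i"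
      show ?thesis unfolding pow_ops_def using pow_ops_proj[OF e _ i, of vs n] h e i by auto
    next
      fix i assume i: "i < ar s" and e: "\<forall>l. length l = ar s \<longrightarrow> opB s l = (\<not> l ! i)"
      have "vs ! i \<in> pow_carrier n" using h i nth_mem subsetD by metis
      then show ?thesis unfolding pow_ops_def using pow_ops_neg[OF e _ i, of vs n] h e i g
        unfolding goodx_def by auto
    next
      fix b assume e: "\<forall>l. length l = ar s \<longrightarrow> opB s l = b"
      show ?thesis unfolding pow_ops_def using pow_ops_const[OF e, of vs n] h e g goodx_True[OF g]
        unfolding goodx_def by (cases b) auto
    qed
    then show "phix x (pow_ops n opB s vs) = opC2 opB s (map (phix x) vs)"
      unfolding opC2_def mp by (simp add: phix_def)
  qed
qed

lemma ker_inj: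
  assumes "goodx n x" "goodx n x'" "ker_on (pow_carrier n) (phix x) = ker_on (pow_carrier n) (phix x')"
  shows "x = x'"
proof
  fix a
  have z: "replicate n False \<in> pow_carrier n" by (simp add: pow_carrier_def)
  have "x a \<longleftrightarrow> a \<in> pow_carrier n \<and> (a, replicate n False) \<notin> ker_on (pow_carrier n) (phix x)" if "goodx n x" for x
    using that z unfolding goodx_def ker_on_def phix_def by auto
  then show "x a = x' a" using assms by metis
qed

definition Iset :: "nat \<Rightarrow> bool list set" where
  "Iset n = Cons False ` ({b. length b = n - 1} - {replicate (n - 1) False})"

definition fZ :: "nat \<Rightarrow> bool list set \<Rightarrow> bool list \<Rightarrow> bool" where
  "fZ n Z a \<longleftrightarrow> length a = n \<and> a \<noteq> replicate n False \<and> (if hd a then map Not a \<notin> Z else a \<in> Z)"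

lemma lists_bool_len: "{b::bool list. length b = k} = {xs. set xs \<subseteq> UNIV \<and> length xs = k}"
  by auto

lemma finite_len: "finite {b::bool list. length b = k}"
  unfolding lists_bool_len by (rule finite_lists_length_eq) simp

lemma card_len: "card {b::bool list. length b = k} = 2 ^ k"
  unfolding lists_bool_len by (subst card_lists_length_eq) auto

lemma finite_pow_carrier: "finite (pow_carrier n)"
  unfolding pow_carrier_def by (rule finite_len)

lemma card_pow_carrier: "card (pow_carrier n) = 2 ^ n"
  unfolding pow_carrier_def by (rule card_len)

lemma finite_Iset: "finite (Iset n)"
  unfolding Iset_def using finite_len by auto

lemma card_Iset: "card (Iset n) = 2 ^ (n - 1) - 1"
proof -
  have "card (Iset n) = card ({b::bool list. length b = n - 1} - {replicate (n - 1) False})"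
    unfolding Iset_def by (rule card_image) (auto simp: inj_on_def)
  also have "\<dots> = 2 ^ (n - 1) - 1"
    by (subst card_Diff_singleton) (auto simp: finite_len card_len)
  finally show ?thesis .
qed

lemma Iset_mem: "b \<in> Iset n \<Longrightarrow> n \<ge> 1 \<Longrightarrow> length b = n \<and> b \<noteq> replicate n False \<and> \<not> hd b"
  unfolding Iset_def by (cases n) auto

lemma fZ_on_I: "Z \<subseteq> Iset n \<Longrightarrow> n \<ge> 1 \<Longrightarrow> b \<in> Iset n \<Longrightarrow> fZ n Z b = (b \<in> Z)"
  using Iset_mem[of b n] unfolding fZ_def by auto

lemma inj_fZ: "n \<ge> 1 \<Longrightarrow> inj_on (fZ n) (Pow (Iset n))"
proof (rule inj_onI)
  fix Z Z' assume n: "n \<ge> 1" and Z: "Z \<in> Pow (Iset n)" and Z': "Z' \<in> Pow (Iset n)" and e: "fZ n Z = fZ n Z'"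
  show "Z = Z'"
  proof (rule set_eqI)
    fix b show "b \<in> Z \<longleftrightarrow> b \<in> Z'"
    proof (cases "b \<in> Iset n")
      case True then show ?thesis using fZ_on_I[of Z n b] fZ_on_I[of Z' n b] Z Z' n e by auto
    next
      case False then show ?thesis using Z Z' by auto
    qed
  qed
qed

lemma hd_map_Not: "a \<noteq> [] \<Longrightarrow> hd (map Not a) = (\<not> hd a)"
  by (cases a) auto

lemma map_Not_repl: "map Not a = replicate n False \<longleftrightarrow> a = replicate n True"
  by (auto simp: list_eq_iff_nth_eq)

lemma goodx_fZ:
  assumes n: "n \<ge> 1" and Z: "Z \<subseteq> Iset n"
  shows "goodx n (fZ n Z)"
  unfolding goodx_def
proof (intro conjI allI impI ballI)
  fix a assume "fZ n Z a" then show "a \<in> pow_carrier n" unfolding fZ_def pow_carrier_def by auto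
next
  show "\<not> fZ n Z (replicate n False)" unfolding fZ_def by auto
next
  fix a assume a: "a \<in> pow_carrier n"
  then have len: "length a = n" unfolding pow_carrier_def by auto
  then have ne: "a \<noteq> []" using n by auto
  have mm: "map Not (map Not a) = a" by (induction a) auto
  have zI: "replicate n False \<notin> Iset n" using Iset_mem[of _ n] n by blast
  have rT: "replicate n True \<noteq> replicate n False" using n by (cases n) auto
  have hdT: "hd (replicate n True)" using n by (cases n) auto
  show "fZ n Z (map Not a) = (\<not> fZ n Z a)"
  proof (cases "a = replicate n False")
    case True
    then show ?thesis using zI Z rT hdT n unfolding fZ_def by (auto simp: mm)
  next
    case F: False
    show ?thesis
    proof (cases "a = replicate n True")
      case True
      then have "map Not a = replicate n False" by (simp add: map_replicate)
      then show ?thesis using True zI Z rT hdT n unfolding fZ_def by auto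
    next
      case False
      then have "map Not a \<noteq> replicate n False" using map_Not_repl by blast
      then show ?thesis using F len hd_map_Not[OF ne] mm unfolding fZ_def by auto
    qed
  qed
qed

definition Ts :: "bool list set \<Rightarrow> nat \<Rightarrow> bool list set set" where
  "Ts A k = {T. T \<subseteq> A \<and> card T \<le> k}"

definition mon :: "bool list set \<Rightarrow> (bool list \<Rightarrow> bool) \<Rightarrow> complex" where
  "mon T x = (if T \<subseteq> {a. x a} then 1 else 0)"

definition polyk :: "bool list set \<Rightarrow> (bool list \<Rightarrow> bool) set \<Rightarrow> nat \<Rightarrow> ((bool list \<Rightarrow> bool) \<Rightarrow> complex) \<Rightarrow> bool" where
  "polyk A X k p \<longleftrightarrow> (\<exists>c. \<forall>x\<in>X. p x = (\<Sum>T\<in>Ts A k. c T * mon T x))"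

lemma finite_Ts: "finite A \<Longrightarrow> finite (Ts A k)"
  unfolding Ts_def by (rule finite_subset[of _ "Pow A"]) auto

lemma polyk_cong:
  assumes "polyk A X k p" "\<And>x. x \<in> X \<Longrightarrow> p x = p' x" shows "polyk A X k p'"
proof -
  obtain c where c: "\<forall>x\<in>X. p x = (\<Sum>T\<in>Ts A k. c T * mon T x)" using assms(1) unfolding polyk_def by blast
  then have "\<forall>x\<in>X. p' x = (\<Sum>T\<in>Ts A k. c T * mon T x)" using assms(2) by simp
  then show ?thesis unfolding polyk_def by blast
qed

lemma polyk_const:
  assumes "finite A" shows "polyk A X k (\<lambda>x. v)"
proof -
  have e: "{} \<in> Ts A k" unfolding Ts_def by auto
  have "(\<Sum>T\<in>Ts A k. (if T = {} then v else 0) * mon T x) = v" for x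
  proof -
    have "(\<Sum>T\<in>Ts A k. (if T = {} then v else 0) * mon T x) = (\<Sum>T\<in>Ts A k. if T = {} then v * mon T x else 0)"
      by (rule sum.cong) auto
    also have "\<dots> = v * mon {} x" using e finite_Ts[OF assms] by (simp add: sum.delta')
    also have "\<dots> = v" by (simp add: mon_def)
    finally show ?thesis .
  qed
  then show ?thesis unfolding polyk_def by (intro exI[of _ "\<lambda>T. if T = {} then v else 0"] ballI) simp
qed

lemma polyk_add:
  assumes "polyk A X k p" "polyk A X k q" shows "polyk A X k (\<lambda>x. p x + q x)"
proof -
  obtain c where c: "\<forall>x\<in>X. p x = (\<Sum>T\<in>Ts A k. c T * mon T x)" using assms(1) unfolding polyk_def by blast
  obtain d where d: "\<forall>x\<in>X. q x = (\<Sum>T\<in>Ts A k. d T * mon T x)" using assms(2) unfolding polyk_def by blast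
  have "\<forall>x\<in>X. p x + q x = (\<Sum>T\<in>Ts A k. (c T + d T) * mon T x)"
    using c d by (simp add: distrib_right sum.distrib)
  then show ?thesis unfolding polyk_def by (rule exI[of _ "\<lambda>T. c T + d T"])
qed

lemma polyk_scale:
  assumes "polyk A X k p" shows "polyk A X k (\<lambda>x. v * p x)"
proof -
  obtain c where c: "\<forall>x\<in>X. p x = (\<Sum>T\<in>Ts A k. c T * mon T x)" using assms(1) unfolding polyk_def by blast
  have "\<forall>x\<in>X. v * p x = (\<Sum>T\<in>Ts A k. (v * c T) * mon T x)"
    using c by (simp add: sum_distrib_left mult.assoc)
  then show ?thesis unfolding polyk_def by (rule exI[of _ "\<lambda>T. v * c T"])
qed

lemma polyk_sum:
  assumes A: "finite A" and J: "finite J" and P: "\<And>j. j \<in> J \<Longrightarrow> polyk A X k (p j)"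
  shows "polyk A X k (\<lambda>x. \<Sum>j\<in>J. p j x)"
  using J P
proof (induction J rule: finite_induct)
  case empty
  then show ?case using polyk_const[OF A, of X k 0] by simp
next
  case (insert j J)
  then show ?case using polyk_add[of A X k "p j" "\<lambda>x. \<Sum>j\<in>J. p j x"] by simp
qed

lemma polyk_mono:
  assumes A: "finite A" and kk: "k \<le> k'" and p: "polyk A X k p" shows "polyk A X k' p"
proof -
  obtain c where c: "\<forall>x\<in>X. p x = (\<Sum>T\<in>Ts A k. c T * mon T x)" using p unfolding polyk_def by blast
  have sub: "Ts A k \<subseteq> Ts A k'" using kk unfolding Ts_def by auto
  have "(\<Sum>T\<in>Ts A k'. (if T \<in> Ts A k then c T else 0) * mon T x) = (\<Sum>T\<in>Ts A k. c T * mon T x)" for x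
  proof -
    have "(\<Sum>T\<in>Ts A k'. (if T \<in> Ts A k then c T else 0) * mon T x) = (\<Sum>T\<in>Ts A k. (if T \<in> Ts A k then c T else 0) * mon T x)"
      by (rule sum.mono_neutral_right[OF finite_Ts[OF A] sub]) auto
    also have "\<dots> = (\<Sum>T\<in>Ts A k. c T * mon T x)" by (rule sum.cong) auto
    finally show ?thesis .
  qed
  then have "\<forall>x\<in>X. p x = (\<Sum>T\<in>Ts A k'. (if T \<in> Ts A k then c T else 0) * mon T x)" using c by simp
  then show ?thesis unfolding polyk_def by (rule exI[of _ "\<lambda>T. if T \<in> Ts A k then c T else 0"])
qed

lemma polyk_var:
  assumes A: "finite A" and a: "a \<in> A" and p: "polyk A X k p"
  shows "polyk A X (Suc k) (\<lambda>x. of_bool (x a) * p x)"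
proof -
  obtain c where c: "\<forall>x\<in>X. p x = (\<Sum>T\<in>Ts A k. c T * mon T x)" using p unfolding polyk_def by blast
  define d where "d T' = (\<Sum>T\<in>{T. T \<in> Ts A k \<and> insert a T = T'}. c T)" for T'
  have fin: "finite (Ts A k)" "finite (Ts A (Suc k))" using finite_Ts[OF A] by auto
  have img: "insert a ` Ts A k \<subseteq> Ts A (Suc k)"
  proof
    fix T' assume "T' \<in> insert a ` Ts A k"
    then obtain T where T: "T \<in> Ts A k" "T' = insert a T" by blast
    then have "finite T" using A unfolding Ts_def by (auto intro: finite_subset)
    then have "card T' \<le> Suc (card T)" using T(2) by (simp add: card_insert_if)
    then show "T' \<in> Ts A (Suc k)" using T a unfolding Ts_def by auto
  qed
  have mi: "of_bool (x a) * mon T x = mon (insert a T) x" for x T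
    unfolding mon_def by auto
  have "of_bool (x a) * p x = (\<Sum>T'\<in>Ts A (Suc k). d T' * mon T' x)" if x: "x \<in> X" for x
  proof -
    have "of_bool (x a) * p x = (\<Sum>T\<in>Ts A k. c T * mon (insert a T) x)"
      using c x by (simp add: sum_distrib_left mi[symmetric] mult.left_commute)
    also have "\<dots> = (\<Sum>T'\<in>Ts A (Suc k). (\<Sum>T\<in>{T. T \<in> Ts A k \<and> insert a T = T'}. c T * mon (insert a T) x))"
      by (rule sum.group[OF fin img, symmetric])
    also have "\<dots> = (\<Sum>T'\<in>Ts A (Suc k). d T' * mon T' x)"
      unfolding d_def sum_distrib_right by (rule sum.cong) auto
    finally show ?thesis .
  qed
  then show ?thesis unfolding polyk_def by blast
qed

lemma polyk_apply:
  assumes A: "finite A" and S: "finite S" and P: "\<And>s. polyk A X k (\<lambda>x. \<psi> x s)"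
  shows "polyk A X k (\<lambda>x. apply_op S U (\<psi> x) i)"
proof (cases "i \<in> S")
  case True
  have "polyk A X k (\<lambda>x. \<Sum>j\<in>S. U i j * \<psi> x j)"
    by (rule polyk_sum[OF A S]) (rule polyk_scale[OF P])
  then show ?thesis using True unfolding apply_op_def by simp
next
  case False
  then show ?thesis unfolding apply_op_def using polyk_const[OF A, of X k 0] by simp
qed

lemma query_expand:
  assumes M: "M \<ge> 2"
  shows "query_op M (phix x) \<psi> (a, y, w) =
     \<psi> (a, (y + M) mod M, w) + of_bool (x a) * (\<psi> (a, (y + (M - 1)) mod M, w) - \<psi> (a, (y + M) mod M, w))"
  using M unfolding query_op_def phix_def by (cases "x a") auto

lemma polyk_query:
  assumes A: "finite A" and M: "M \<ge> 2" and X: "\<And>x a. x \<in> X \<Longrightarrow> x a \<Longrightarrow> a \<in> A"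
    and P: "\<And>s. polyk A X k (\<lambda>x. \<psi> x s)"
  shows "polyk A X (Suc k) (\<lambda>x. query_op M (phix x) (\<psi> x) s)"
proof -
  obtain a y w where s: "s = (a, y, w)" by (cases s) auto
  define s0 where "s0 = (a, (y + M) mod M, w)"
  define s1 where "s1 = (a, (y + (M - 1)) mod M, w)"
  have e: "query_op M (phix x) (\<psi> x) s = \<psi> x s0 + of_bool (x a) * (\<psi> x s1 - \<psi> x s0)" for x
    unfolding s s0_def s1_def by (rule query_expand[OF M])
  have p0: "polyk A X (Suc k) (\<lambda>x. \<psi> x s0)" by (rule polyk_mono[OF A _ P]) simp
  show ?thesis
  proof (cases "a \<in> A")
    case True
    have d: "polyk A X k (\<lambda>x. \<psi> x s1 + (-1) * \<psi> x s0)"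
      by (rule polyk_add[OF P polyk_scale[OF P]])
    have "polyk A X (Suc k) (\<lambda>x. of_bool (x a) * (\<psi> x s1 + (-1) * \<psi> x s0))"
      by (rule polyk_var[OF A True d])
    from polyk_add[OF p0 this] show ?thesis
      by (rule polyk_cong) (simp add: e)
  next
    case False
    show ?thesis
    proof (rule polyk_cong[OF p0])
      fix x assume "x \<in> X"
      then have "\<not> x a" using X False by blast
      then show "\<psi> x s0 = query_op M (phix x) (\<psi> x) s" by (simp add: e)
    qed
  qed
qed

lemma polyk_qrun:
  assumes A: "finite A" and S: "finite S" and M: "M \<ge> 2" and X: "\<And>x a. x \<in> X \<Longrightarrow> x a \<Longrightarrow> a \<in> A"
  shows "(\<And>s. polyk A X k (\<lambda>x. \<psi> x s)) \<Longrightarrow>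
     polyk A X (k + (length Us - 1)) (\<lambda>x. qrun S M (phix x) Us (\<psi> x) s)"
proof (induction Us arbitrary: \<psi> k s rule: induct_list012)
  case 1
  then show ?case by simp
next
  case (2 U)
  then show ?case by (simp add: polyk_apply[OF A S])
next
  case (3 U V Us)
  have ap: "polyk A X k (\<lambda>x. apply_op S U (\<psi> x) s'')" for s''
    by (rule polyk_apply[OF A S]) (rule "3.prems")
  have "polyk A X (Suc k) (\<lambda>x. query_op M (phix x) (apply_op S U (\<psi> x)) s')" for s'
    apply (rule polyk_query[OF A M])
     apply (erule (1) X)
    apply (rule ap)
    done
  then have "polyk A X (Suc k + (length (V # Us) - 1))
     (\<lambda>x. qrun S M (phix x) (V # Us) (query_op M (phix x) (apply_op S U (\<psi> x))) s)"
    by (rule "3.IH"(2))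
  then show ?case by simp
qed

lemma modinj_aux: "(y2::nat) \<le> y1 \<Longrightarrow> y1 < M \<Longrightarrow> (y1 + c) mod M = (y2 + c) mod M \<Longrightarrow> y1 = y2"
proof -
  assume a: "y2 \<le> y1" "y1 < M" "(y1 + c) mod M = (y2 + c) mod M"
  then have "M dvd (y1 + c) - (y2 + c)" using mod_eq_dvd_iff_nat[of "y2 + c" "y1 + c" M] by auto
  then have "M dvd y1 - y2" by simp
  moreover have "y1 - y2 < M" using a by auto
  ultimately have "y1 - y2 = 0" using nat_dvd_not_less by (metis gr0I)
  then show ?thesis using a by auto
qed

lemma modinj: "(y1::nat) < M \<Longrightarrow> y2 < M \<Longrightarrow> (y1 + c) mod M = (y2 + c) mod M \<Longrightarrow> y1 = y2"
  by (metis modinj_aux nat_le_linear)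

definition nrm :: "qbasis set \<Rightarrow> (qbasis \<Rightarrow> complex) \<Rightarrow> real" where
  "nrm S \<psi> = (\<Sum>s\<in>S. (cmod (\<psi> s))\<^sup>2)"

lemma nrm_complex: "complex_of_real (nrm S \<psi>) = (\<Sum>s\<in>S. \<psi> s * cnj (\<psi> s))"
  unfolding nrm_def of_real_sum by (rule sum.cong[OF refl]) (rule complex_norm_square)

lemma finite_qbasis: "finite (qbasis_set n M d)"
  unfolding qbasis_set_def using finite_pow_carrier by auto

lemma query_norm:
  assumes M: "M > 0"
  shows "nrm (qbasis_set n M d) (query_op M \<phi> \<psi>) = nrm (qbasis_set n M d) \<psi>"
proof -
  let ?S = "qbasis_set n M d"
  define g where "g = (\<lambda>(a::bool list, y::nat, w::nat). (a, (y + (M - \<phi> a mod M)) mod M, w))"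
  have q: "query_op M \<phi> \<psi> = \<psi> \<circ> g" unfolding query_op_def g_def by auto
  have sub: "g ` ?S \<subseteq> ?S" unfolding g_def qbasis_set_def using M by auto
  have inj: "inj_on g ?S"
  proof (rule inj_onI)
    fix s t assume s: "s \<in> ?S" and t: "t \<in> ?S" and e: "g s = g t"
    obtain a y w where sa: "s = (a, y, w)" by (cases s) auto
    obtain a' y' w' where ta: "t = (a', y', w')" by (cases t) auto
    have "a = a'" "w = w'" using e unfolding sa ta g_def by auto
    then have "(y + (M - \<phi> a mod M)) mod M = (y' + (M - \<phi> a mod M)) mod M"
      using e unfolding sa ta g_def by auto
    moreover have "y < M" "y' < M" using s t unfolding sa ta qbasis_set_def by auto
    ultimately have "y = y'" using modinj by blast
    then show "s = t" using sa ta \<open>a = a'\<close> \<open>w = w'\<close> by simp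
  qed
  have bij: "bij_betw g ?S ?S"
    unfolding bij_betw_def using inj endo_inj_surj[OF finite_qbasis sub inj] by simp
  have "nrm ?S (\<psi> \<circ> g) = nrm ?S \<psi>"
    unfolding nrm_def using sum.reindex_bij_betw[OF bij, of "\<lambda>s. (cmod (\<psi> s))\<^sup>2"] by simp
  then show ?thesis using q by simp
qed

lemma apply_norm:
  assumes S: "finite S" and U: "unitary_on S U"
  shows "nrm S (apply_op S U \<psi>) = nrm S \<psi>"
proof -
  have d: "(\<Sum>i\<in>S. U i j * cnj (U i k)) = (if j = k then 1 else 0)" if "j \<in> S" "k \<in> S" for j k
  proof -
    have "(\<Sum>i\<in>S. U i j * cnj (U i k)) = cnj (\<Sum>i\<in>S. cnj (U i j) * U i k)"
      by (simp add: cnj_sum mult.commute)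
    also have "\<dots> = (if j = k then 1 else 0)" using U that unfolding unitary_on_def by simp
    finally show ?thesis .
  qed
  have "complex_of_real (nrm S (apply_op S U \<psi>)) =
     (\<Sum>i\<in>S. (\<Sum>j\<in>S. U i j * \<psi> j) * cnj (\<Sum>k\<in>S. U i k * \<psi> k))"
    unfolding nrm_complex apply_op_def by (rule sum.cong) auto
  also have "\<dots> = (\<Sum>i\<in>S. \<Sum>j\<in>S. \<Sum>k\<in>S. (\<psi> j * cnj (\<psi> k)) * (U i j * cnj (U i k)))"
    unfolding cnj_sum sum_product
    by (intro sum.cong refl) simp
  also have "\<dots> = (\<Sum>j\<in>S. \<Sum>i\<in>S. \<Sum>k\<in>S. (\<psi> j * cnj (\<psi> k)) * (U i j * cnj (U i k)))"
    by (rule sum.swap)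
  also have "\<dots> = (\<Sum>j\<in>S. \<Sum>k\<in>S. \<Sum>i\<in>S. (\<psi> j * cnj (\<psi> k)) * (U i j * cnj (U i k)))"
    by (rule sum.cong[OF refl]) (rule sum.swap)
  also have "\<dots> = (\<Sum>j\<in>S. \<Sum>k\<in>S. (\<psi> j * cnj (\<psi> k)) * (if j = k then 1 else 0))"
    unfolding sum_distrib_left[symmetric] by (intro sum.cong refl) (simp add: d)
  also have "\<dots> = (\<Sum>j\<in>S. \<psi> j * cnj (\<psi> j))"
  proof (rule sum.cong[OF refl])
    fix j assume j: "j \<in> S"
    have "(\<Sum>k\<in>S. (\<psi> j * cnj (\<psi> k)) * (if j = k then 1 else 0)) = (\<Sum>k\<in>S. if j = k then \<psi> j * cnj (\<psi> k) else 0)"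
      by (rule sum.cong) auto
    also have "\<dots> = \<psi> j * cnj (\<psi> j)" using S j by (simp add: sum.delta)
    finally show "(\<Sum>k\<in>S. (\<psi> j * cnj (\<psi> k)) * (if j = k then 1 else 0)) = \<psi> j * cnj (\<psi> j)" .
  qed
  also have "\<dots> = complex_of_real (nrm S \<psi>)" by (simp add: nrm_complex)
  finally show ?thesis using of_real_eq_iff by blast
qed

lemma qrun_norm:
  assumes M: "M > 0"
  shows "\<forall>U\<in>set Us. unitary_on (qbasis_set n M d) U \<Longrightarrow>
    nrm (qbasis_set n M d) (qrun (qbasis_set n M d) M \<phi> Us \<psi>) = nrm (qbasis_set n M d) \<psi>"
proof (induction Us arbitrary: \<psi> rule: induct_list012)
  case 1 then show ?case by simp
next
  case (2 U) then show ?case using apply_norm[OF finite_qbasis] by simp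
next
  case (3 U V Us)
  have "nrm (qbasis_set n M d) (qrun (qbasis_set n M d) M \<phi> (U # V # Us) \<psi>)
      = nrm (qbasis_set n M d) (query_op M \<phi> (apply_op (qbasis_set n M d) U \<psi>))"
    using "3.IH"(2) "3.prems" by simp
  also have "\<dots> = nrm (qbasis_set n M d) \<psi>"
    using query_norm[OF M] apply_norm[OF finite_qbasis] "3.prems" by simp
  finally show ?case .
qed

definition ip :: "qbasis set \<Rightarrow> (qbasis \<Rightarrow> complex) \<Rightarrow> (qbasis \<Rightarrow> complex) \<Rightarrow> complex" where
  "ip S u v = (\<Sum>s\<in>S. cnj (u s) * v s)"

definition orthonormal :: "qbasis set \<Rightarrow> nat \<Rightarrow> (nat \<Rightarrow> qbasis \<Rightarrow> complex) \<Rightarrow> bool" where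
  "orthonormal S m e \<longleftrightarrow> (\<forall>j<m. \<forall>k<m. ip S (e j) (e k) = (if j = k then 1 else 0))"

definition inspan :: "qbasis set \<Rightarrow> nat \<Rightarrow> (nat \<Rightarrow> qbasis \<Rightarrow> complex) \<Rightarrow> (qbasis \<Rightarrow> complex) \<Rightarrow> bool" where
  "inspan S m e v \<longleftrightarrow> (\<exists>\<beta>. \<forall>s\<in>S. v s = (\<Sum>k<m. \<beta> k * e k s))"

lemma ip_cnj: "ip S v u = cnj (ip S u v)"
  unfolding ip_def by (simp add: cnj_sum mult.commute)

lemma ip_self: "ip S u u = complex_of_real (nrm S u)"
  unfolding ip_def nrm_complex by (simp add: mult.commute)

lemma nrm_nonneg: "nrm S u \<ge> 0"
  unfolding nrm_def by (simp add: sum_nonneg)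

lemma nrm_zero: "finite S \<Longrightarrow> nrm S u = 0 \<Longrightarrow> s \<in> S \<Longrightarrow> u s = 0"
  unfolding nrm_def using sum_nonneg_eq_0_iff[of S "\<lambda>s. (cmod (u s))\<^sup>2"] by auto

lemma gs_step:
  assumes S: "finite S" and on: "orthonormal S m e"
  shows "\<exists>m' e'. m' \<le> Suc m \<and> orthonormal S m' e' \<and> inspan S m' e' v \<and>
     (\<forall>u. inspan S m e u \<longrightarrow> inspan S m' e' u)"
proof -
  define w where "w s = v s - (\<Sum>k<m. ip S (e k) v * e k s)" for s
  define r where "r = nrm S w"
  have ipw: "ip S (e j) w = 0" if j: "j < m" for j
  proof -
    have "ip S (e j) w = ip S (e j) v - (\<Sum>s\<in>S. \<Sum>k<m. ip S (e k) v * (cnj (e j s) * e k s))"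
      unfolding ip_def w_def right_diff_distrib sum_subtractf sum_distrib_left
      by (simp add: mult_ac)
    also have "(\<Sum>s\<in>S. \<Sum>k<m. ip S (e k) v * (cnj (e j s) * e k s)) = (\<Sum>k<m. \<Sum>s\<in>S. ip S (e k) v * (cnj (e j s) * e k s))"
      by (rule sum.swap)
    also have "\<dots> = (\<Sum>k<m. ip S (e k) v * ip S (e j) (e k))"
      unfolding ip_def sum_distrib_left by simp
    finally have "ip S (e j) w = ip S (e j) v - (\<Sum>k<m. ip S (e k) v * ip S (e j) (e k))" .
    also have "(\<Sum>k<m. ip S (e k) v * ip S (e j) (e k)) = (\<Sum>k<m. if k = j then ip S (e j) v else 0)"
      using on j unfolding orthonormal_def by (intro sum.cong refl) auto
    also have "\<dots> = ip S (e j) v" using j by (simp add: sum.delta)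
    finally show ?thesis by simp
  qed
  show ?thesis
  proof (cases "r = 0")
    case True
    have "inspan S m e v"
      unfolding inspan_def
    proof (intro exI[of _ "\<lambda>k. ip S (e k) v"] ballI)
      fix s assume "s \<in> S"
      then have "w s = 0" using nrm_zero[OF S] True unfolding r_def by blast
      then show "v s = (\<Sum>k<m. ip S (e k) v * e k s)" unfolding w_def by simp
    qed
    then show ?thesis using on by (intro exI[of _ m] exI[of _ e]) auto
  next
    case False
    then have rpos: "r > 0" using nrm_nonneg[of S w] unfolding r_def by linarith
    define c where "c = complex_of_real (sqrt r)"
    have c0: "c \<noteq> 0" unfolding c_def using rpos by simp
    have cc: "cnj c * c = complex_of_real r" unfolding c_def using rpos
      by (simp flip: of_real_mult)
    define e' where "e' = e(m := (\<lambda>s. w s / c))"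
    have ip_new: "ip S (e j) (e' m) = 0" if "j < m" for j
      unfolding e'_def using ipw[OF that] by (simp add: ip_def sum_divide_distrib[symmetric])
    have ip_new2: "ip S (e' m) (e' m) = 1"
    proof -
      have "ip S (e' m) (e' m) = ip S w w / (cnj c * c)"
        unfolding e'_def ip_def by (simp add: sum_divide_distrib[symmetric])
      also have "\<dots> = 1" using ip_self[of S w] cc rpos unfolding r_def by simp
      finally show ?thesis .
    qed
    have on': "orthonormal S (Suc m) e'"
      unfolding orthonormal_def
    proof (intro allI impI)
      fix j k assume j: "j < Suc m" and k: "k < Suc m"
      show "ip S (e' j) (e' k) = (if j = k then 1 else 0)"
      proof (cases "j = m")
        case True
        show ?thesis
        proof (cases "k = m")
          case True then show ?thesis using \<open>j = m\<close> ip_new2 by simp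
        next
          case False
          then have "k < m" using k by simp
          have "ip S (e' j) (e' k) = cnj (ip S (e k) (e' m))"
            using \<open>j = m\<close> False ip_cnj[of S "e' m" "e k"] unfolding e'_def by simp
          then show ?thesis using ip_new[OF \<open>k < m\<close>] False \<open>j = m\<close> by simp
        qed
      next
        case False
        then have "j < m" using j by simp
        show ?thesis
        proof (cases "k = m")
          case True then show ?thesis using ip_new[OF \<open>j < m\<close>] False
            unfolding e'_def by simp
        next
          case False2: False
          then show ?thesis using on \<open>j < m\<close> k False unfolding orthonormal_def e'_def by simp
        qed
      qed
    qed
    have sp_v: "inspan S (Suc m) e' v"
      unfolding inspan_def
    proof (intro exI[of _ "\<lambda>k. if k < m then ip S (e k) v else c"] ballI)
      fix s assume "s \<in> S"
      have "(\<Sum>k<Suc m. (if k < m then ip S (e k) v else c) * e' k s)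
          = (\<Sum>k<m. ip S (e k) v * e k s) + c * (w s / c)"
        unfolding e'_def by simp
      also have "\<dots> = v s" using c0 unfolding w_def by simp
      finally show "v s = (\<Sum>k<Suc m. (if k < m then ip S (e k) v else c) * e' k s)" by simp
    qed
    have sp_old: "inspan S (Suc m) e' u" if ua: "inspan S m e u" for u
    proof -
      obtain \<beta> where b: "\<forall>s\<in>S. u s = (\<Sum>k<m. \<beta> k * e k s)" using ua unfolding inspan_def by blast
      show ?thesis unfolding inspan_def
      proof (intro exI[of _ "\<lambda>k. if k < m then \<beta> k else 0"] ballI)
        fix s assume "s \<in> S"
        then show "u s = (\<Sum>k<Suc m. (if k < m then \<beta> k else 0) * e' k s)"
          using b unfolding e'_def by simp
      qed
    qed
    show ?thesis using on' sp_v sp_old by (intro exI[of _ "Suc m"] exI[of _ e']) auto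
  qed
qed

lemma gram_schmidt:
  assumes S: "finite S" and I: "finite I"
  shows "\<exists>m e. m \<le> card I \<and> orthonormal S m e \<and> (\<forall>i\<in>I. inspan S m e (\<alpha> i))"
  using I
proof (induction I rule: finite_induct)
  case empty
  then show ?case by (intro exI[of _ 0]) (auto simp: orthonormal_def)
next
  case (insert i I)
  then obtain m e where me: "m \<le> card I" "orthonormal S m e" "\<forall>i\<in>I. inspan S m e (\<alpha> i)" by blast
  obtain m' e' where me': "m' \<le> Suc m" "orthonormal S m' e'" "inspan S m' e' (\<alpha> i)"
    "\<forall>u. inspan S m e u \<longrightarrow> inspan S m' e' u"
    using gs_step[OF S me(2), of "\<alpha> i"] by blast
  have "m' \<le> card (insert i I)" using me(1) me'(1) insert by simp
  then show ?case using me me' by blast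
qed

lemma span_nrm:
  assumes S: "finite S" and on: "orthonormal S m e" and u: "\<forall>s\<in>S. u s = (\<Sum>k<m. \<beta> k * e k s)"
  shows "nrm S u = (\<Sum>k<m. (cmod (\<beta> k))\<^sup>2)"
proof -
  have "complex_of_real (nrm S u) = (\<Sum>s\<in>S. (\<Sum>j<m. \<beta> j * e j s) * cnj (\<Sum>k<m. \<beta> k * e k s))"
    unfolding nrm_complex using u by (intro sum.cong refl) simp
  also have "\<dots> = (\<Sum>s\<in>S. \<Sum>j<m. \<Sum>k<m. (\<beta> j * cnj (\<beta> k)) * (cnj (e k s) * e j s))"
    unfolding cnj_sum sum_product by (intro sum.cong refl) (simp add: mult_ac)
  also have "\<dots> = (\<Sum>j<m. \<Sum>s\<in>S. \<Sum>k<m. (\<beta> j * cnj (\<beta> k)) * (cnj (e k s) * e j s))"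
    by (rule sum.swap)
  also have "\<dots> = (\<Sum>j<m. \<Sum>k<m. \<Sum>s\<in>S. (\<beta> j * cnj (\<beta> k)) * (cnj (e k s) * e j s))"
    by (rule sum.cong[OF refl]) (rule sum.swap)
  also have "\<dots> = (\<Sum>j<m. \<Sum>k<m. (\<beta> j * cnj (\<beta> k)) * (if k = j then 1 else 0))"
    unfolding sum_distrib_left[symmetric]
    using on unfolding orthonormal_def ip_def by (intro sum.cong refl) simp
  also have "\<dots> = (\<Sum>j<m. \<beta> j * cnj (\<beta> j))"
  proof (rule sum.cong[OF refl])
    fix j assume j: "j \<in> {..<m}"
    have "(\<Sum>k<m. (\<beta> j * cnj (\<beta> k)) * (if k = j then 1 else 0)) = (\<Sum>k<m. if k = j then \<beta> j * cnj (\<beta> k) else 0)"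
      by (rule sum.cong) auto
    also have "\<dots> = \<beta> j * cnj (\<beta> j)" using j by (simp add: sum.delta')
    finally show "(\<Sum>k<m. (\<beta> j * cnj (\<beta> k)) * (if k = j then 1 else 0)) = \<beta> j * cnj (\<beta> j)" .
  qed
  also have "\<dots> = complex_of_real (\<Sum>k<m. (cmod (\<beta> k))\<^sup>2)"
    unfolding of_real_sum by (intro sum.cong refl) (rule complex_norm_square[symmetric])
  finally show ?thesis using of_real_eq_iff by blast
qed

lemma span_pt:
  assumes u: "u s = (\<Sum>k<m. \<beta> k * e k s)"
  shows "(cmod (u s))\<^sup>2 \<le> (\<Sum>k<m. (cmod (\<beta> k))\<^sup>2) * (\<Sum>k<m. (cmod (e k s))\<^sup>2)"
proof -
  have "cmod (u s) \<le> (\<Sum>k<m. cmod (\<beta> k) * cmod (e k s))"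
    unfolding u using norm_sum[of "\<lambda>k. \<beta> k * e k s" "{..<m}"] by (simp add: norm_mult)
  then have "(cmod (u s))\<^sup>2 \<le> (\<Sum>k<m. cmod (\<beta> k) * cmod (e k s))\<^sup>2"
    by (simp add: power_mono)
  also have "\<dots> \<le> (\<Sum>k<m. (cmod (\<beta> k))\<^sup>2) * (\<Sum>k<m. (cmod (e k s))\<^sup>2)"
    by (rule Cauchy_Schwarz_ineq_sum)
  finally show ?thesis .
qed

lemma nrm_e: "orthonormal S m e \<Longrightarrow> k < m \<Longrightarrow> nrm S (e k) = 1"
  unfolding orthonormal_def using ip_self[of S "e k"] by auto

lemma success_bound:
  assumes S: "finite S" and X: "finite X" and on: "orthonormal S m e"
    and b: "\<And>x s. x \<in> X \<Longrightarrow> s \<in> S \<Longrightarrow> \<psi> x s = (\<Sum>k<m. \<beta> x k * e k s)"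
    and n1: "\<And>x. x \<in> X \<Longrightarrow> nrm S (\<psi> x) \<le> 1"
    and inj: "inj_on tgt X"
  shows "(\<Sum>x\<in>X. \<Sum>s\<in>{s\<in>S. out s = tgt x}. (cmod (\<psi> x s))\<^sup>2) \<le> real m"
proof -
  define K where "K s = (\<Sum>k<m. (cmod (e k s))\<^sup>2)" for s
  have K0: "K s \<ge> 0" for s unfolding K_def by (simp add: sum_nonneg)
  have pt: "(cmod (\<psi> x s))\<^sup>2 \<le> K s" if x: "x \<in> X" and s: "s \<in> S" for x s
  proof -
    have "(cmod (\<psi> x s))\<^sup>2 \<le> (\<Sum>k<m. (cmod (\<beta> x k))\<^sup>2) * K s"
      unfolding K_def by (rule span_pt) (rule b[OF x s])
    also have "(\<Sum>k<m. (cmod (\<beta> x k))\<^sup>2) = nrm S (\<psi> x)"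
      using span_nrm[OF S on, of "\<psi> x" "\<beta> x"] b x by simp
    also have "nrm S (\<psi> x) * K s \<le> 1 * K s" using n1[OF x] K0 by (intro mult_right_mono) auto
    finally show ?thesis by simp
  qed
  have "(\<Sum>x\<in>X. \<Sum>s\<in>{s\<in>S. out s = tgt x}. (cmod (\<psi> x s))\<^sup>2) \<le> (\<Sum>x\<in>X. \<Sum>s\<in>{s\<in>S. out s = tgt x}. K s)"
    using pt by (intro sum_mono) auto
  also have "\<dots> = (\<Sum>x\<in>X. \<Sum>s\<in>S. if out s = tgt x then K s else 0)"
    using S by (simp add: sum.inter_filter)
  also have "\<dots> = (\<Sum>s\<in>S. \<Sum>x\<in>X. if out s = tgt x then K s else 0)"
    by (rule sum.swap)
  also have "\<dots> \<le> (\<Sum>s\<in>S. K s)"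
  proof (rule sum_mono)
    fix s assume "s \<in> S"
    have "(\<Sum>x\<in>X. if out s = tgt x then K s else 0) = (\<Sum>x\<in>{x\<in>X. out s = tgt x}. K s)"
      by (rule sum.inter_filter[symmetric, OF X])
    also have "\<dots> = real (card {x\<in>X. out s = tgt x}) * K s" by simp
    also have "\<dots> \<le> 1 * K s"
    proof (rule mult_right_mono[OF _ K0])
      have "card {x\<in>X. out s = tgt x} \<le> 1"
        using inj X by (auto simp: card_le_Suc0_iff_eq inj_on_def)
      then show "real (card {x\<in>X. out s = tgt x}) \<le> 1" by simp
    qed
    finally show "(\<Sum>x\<in>X. if out s = tgt x then K s else 0) \<le> K s" by simp
  qed
  also have "\<dots> = (\<Sum>k<m. nrm S (e k))"
    unfolding K_def nrm_def by (rule sum.swap)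
  also have "\<dots> = real m" using nrm_e[OF on] by simp
  finally show ?thesis .
qed

lemma tree_count:
  assumes "finite X" "\<And>x a. x \<in> X \<Longrightarrow> \<phi> x a \<in> {0, 1}" "\<And>x. x \<in> X \<Longrightarrow> nqueries (\<phi> x) t \<le> q"
  shows "card ((\<lambda>x. run_tree (\<phi> x) t) ` X) \<le> 2 ^ q"
  using assms
proof (induction t arbitrary: X q)
  case (Leaf r)
  have "card ((\<lambda>x. run_tree (\<phi> x) (Leaf r)) ` X) \<le> card {r}" by (rule card_mono) auto
  also have "\<dots> \<le> 2 ^ q" by simp
  finally show ?case .
next
  case (Query a f)
  show ?case
  proof (cases "X = {}")
    case True then show ?thesis by simp
  next
    case False
    then obtain x0 where "x0 \<in> X" by blast
    then have "Suc (nqueries (\<phi> x0) (f (\<phi> x0 a))) \<le> q" using Query.prems(3)[of x0] by simp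
    then obtain q' where q: "q = Suc q'" by (cases q) auto
    define X0 where "X0 = {x\<in>X. \<phi> x a = 0}"
    define X1 where "X1 = {x\<in>X. \<phi> x a = 1}"
    have sub: "(\<lambda>x. run_tree (\<phi> x) (Query a f)) ` X \<subseteq>
        (\<lambda>x. run_tree (\<phi> x) (f 0)) ` X0 \<union> (\<lambda>x. run_tree (\<phi> x) (f 1)) ` X1"
    proof
      fix r assume "r \<in> (\<lambda>x. run_tree (\<phi> x) (Query a f)) ` X"
      then obtain x where x: "x \<in> X" "r = run_tree (\<phi> x) (f (\<phi> x a))" by auto
      then show "r \<in> (\<lambda>x. run_tree (\<phi> x) (f 0)) ` X0 \<union> (\<lambda>x. run_tree (\<phi> x) (f 1)) ` X1"
        using Query.prems(2)[of x a] unfolding X0_def X1_def by auto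
    qed
    have c0: "card ((\<lambda>x. run_tree (\<phi> x) (f 0)) ` X0) \<le> 2 ^ q'"
    proof (rule Query.IH)
      show "finite X0" using Query.prems(1) unfolding X0_def by simp
      show "\<phi> x b \<in> {0, 1}" if "x \<in> X0" for x b using that Query.prems(2) unfolding X0_def by blast
      show "nqueries (\<phi> x) (f 0) \<le> q'" if "x \<in> X0" for x
        using that Query.prems(3)[of x] unfolding X0_def q by simp
    qed simp
    have c1: "card ((\<lambda>x. run_tree (\<phi> x) (f 1)) ` X1) \<le> 2 ^ q'"
    proof (rule Query.IH)
      show "finite X1" using Query.prems(1) unfolding X1_def by simp
      show "\<phi> x b \<in> {0, 1}" if "x \<in> X1" for x b using that Query.prems(2) unfolding X1_def by blast
      show "nqueries (\<phi> x) (f 1) \<le> q'" if "x \<in> X1" for x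
        using that Query.prems(3)[of x] unfolding X1_def q by simp
    qed simp
    have "card ((\<lambda>x. run_tree (\<phi> x) (Query a f)) ` X) \<le>
        card ((\<lambda>x. run_tree (\<phi> x) (f 0)) ` X0 \<union> (\<lambda>x. run_tree (\<phi> x) (f 1)) ` X1)"
      by (rule card_mono[OF _ sub]) (use Query.prems(1) in \<open>auto simp: X0_def X1_def\<close>)
    also have "\<dots> \<le> 2 ^ q' + 2 ^ q'" using card_Un_le c0 c1 by (meson add_mono order_trans)
    also have "\<dots> = 2 ^ q" using q by simp
    finally show ?thesis .
  qed
qed

lemma correct_count:
  assumes X: "finite X" and v: "\<And>x a. x \<in> X \<Longrightarrow> \<phi> x a \<in> {0, 1}"
    and nq: "\<And>x. x \<in> X \<Longrightarrow> nqueries (\<phi> x) t \<le> q" and inj: "inj_on tgt X"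
  shows "card {x\<in>X. run_tree (\<phi> x) t = tgt x} \<le> 2 ^ q"
proof -
  let ?C = "{x\<in>X. run_tree (\<phi> x) t = tgt x}"
  have "card ?C = card (tgt ` ?C)" using inj by (intro card_image[symmetric]) (auto intro: inj_on_subset)
  also have "\<dots> \<le> card ((\<lambda>x. run_tree (\<phi> x) t) ` X)"
    by (rule card_mono) (use X in auto)
  also have "\<dots> \<le> 2 ^ q" by (rule tree_count[OF X v nq])
  finally show ?thesis .
qed

lemma prob_sum_bound:
  fixes p :: "dtree pmf"
  assumes X: "finite X" and v: "\<And>x a. x \<in> X \<Longrightarrow> \<phi> x a \<in> {0, 1}"
    and nq: "\<And>x t. x \<in> X \<Longrightarrow> t \<in> set_pmf p \<Longrightarrow> nqueries (\<phi> x) t \<le> q" and inj: "inj_on tgt X"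
  shows "(\<Sum>x\<in>X. measure_pmf.prob p {t. run_tree (\<phi> x) t = tgt x}) \<le> 2 ^ q"
proof -
  have "(\<Sum>x\<in>X. measure_pmf.prob p {t. run_tree (\<phi> x) t = tgt x})
      = (\<Sum>x\<in>X. measure_pmf.expectation p (indicator {t. run_tree (\<phi> x) t = tgt x}))"
    by simp
  also have "\<dots> = measure_pmf.expectation p (\<lambda>t. \<Sum>x\<in>X. indicator {t. run_tree (\<phi> x) t = tgt x} t)"
    by (subst Bochner_Integration.integral_sum) (auto intro!: measure_pmf.integrable_const_bound[where B=1])
  also have "\<dots> \<le> 2 ^ q"
  proof (rule measure_pmf.integral_le_const)
    show "integrable (measure_pmf p) (\<lambda>t. \<Sum>x\<in>X. indicator {t. run_tree (\<phi> x) t = tgt x} t :: real)"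
      by (intro Bochner_Integration.integrable_sum measure_pmf.integrable_const_bound[where B=1]) auto
    show "AE t in measure_pmf p. (\<Sum>x\<in>X. indicator {t. run_tree (\<phi> x) t = tgt x} t) \<le> (2 ^ q :: real)"
      unfolding AE_measure_pmf_iff
    proof
      fix t assume t: "t \<in> set_pmf p"
      have "(\<Sum>x\<in>X. indicator {t. run_tree (\<phi> x) t = tgt x} t :: real) = (\<Sum>x\<in>X. if run_tree (\<phi> x) t = tgt x then 1 else 0)"
        by (intro sum.cong refl) (simp add: indicator_def)
      also have "\<dots> = (\<Sum>x\<in>{x\<in>X. run_tree (\<phi> x) t = tgt x}. 1)"
        by (rule sum.inter_filter[symmetric, OF X])
      also have "\<dots> = real (card {x\<in>X. run_tree (\<phi> x) t = tgt x})" by simp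
      also have "\<dots> \<le> 2 ^ q" using of_nat_mono[OF correct_count[OF X v nq[OF _ t] inj], where 'a=real]
        by simp
      finally show "(\<Sum>x\<in>X. indicator {t. run_tree (\<phi> x) t = tgt x} t) \<le> (2 ^ q :: real)" .
    qed
  qed
  finally show ?thesis .
qed

lemma card_Ts:
  assumes A: "finite A"
  shows "card (Ts A q) = (\<Sum>j\<le>q. card A choose j)"
proof -
  have e: "Ts A q = (\<Union>j\<in>{..q}. {T. T \<subseteq> A \<and> card T = j})" unfolding Ts_def by auto
  have "card (\<Union>j\<in>{..q}. {T. T \<subseteq> A \<and> card T = j}) = (\<Sum>j\<le>q. card {T. T \<subseteq> A \<and> card T = j})"
    by (rule card_UN_disjoint) (use A in auto)
  also have "\<dots> = (\<Sum>j\<le>q. card A choose j)" using n_subsets[OF A] by simp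
  finally show ?thesis using e by simp
qed

lemma binom_bound: "8 ^ V * (\<Sum>j\<le>q. V choose j) \<le> 8 ^ q * 9 ^ (V::nat)"
proof -
  define f where "f j = (V choose j) * 8 ^ (V - j)" for j
  have "8 ^ V * (\<Sum>j\<le>q. V choose j) = (\<Sum>j\<le>q. (V choose j) * 8 ^ V)"
    by (subst mult.commute) (rule sum_distrib_right)
  also have "\<dots> \<le> (\<Sum>j\<le>q. 8 ^ q * f j)"
  proof (rule sum_mono)
    fix j assume j: "j \<in> {..q}"
    show "(V choose j) * 8 ^ V \<le> 8 ^ q * f j"
    proof (cases "j \<le> V")
      case True
      have "(8::nat) ^ V = 8 ^ j * 8 ^ (V - j)" using True by (simp flip: power_add)
      also have "\<dots> \<le> 8 ^ q * 8 ^ (V - j)" using j by (intro mult_right_mono power_increasing) auto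
      finally show ?thesis unfolding f_def by (simp add: mult_ac mult_left_mono)
    next
      case False then show ?thesis by (simp add: f_def)
    qed
  qed
  also have "\<dots> = 8 ^ q * (\<Sum>j\<le>q. f j)" by (simp add: sum_distrib_left)
  also have "(\<Sum>j\<le>q. f j) \<le> (\<Sum>j\<le>max q V. f j)" by (rule sum_mono2) auto
  also have "(\<Sum>j\<le>max q V. f j) = (\<Sum>j\<le>V. f j)"
    by (rule sum.mono_neutral_right) (auto simp: f_def)
  also have "(\<Sum>j\<le>V. f j) = 9 ^ V"
    using binomial_ring[of "1::nat" 8 V] unfolding f_def by simp
  finally show ?thesis by simp
qed

lemma card_Ts_bound: "finite A \<Longrightarrow> 8 ^ card A * card (Ts A q) \<le> 8 ^ q * 9 ^ card A"
  using card_Ts binom_bound by metis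

lemma pow_ineq: "V \<ge> 64 \<Longrightarrow> (3::nat)^12 * 2^V \<le> 3^V"
proof (induction V rule: dec_induct)
  case base then show ?case by simp
next
  case (step V)
  have "(3::nat)^12 * 2^Suc V = 2 * (3^12 * 2^V)" by simp
  also have "\<dots> \<le> 2 * 3^V" using step.IH by simp
  also have "\<dots> \<le> 3 * 3^V" by simp
  finally show ?case by simp
qed

lemma big_ineq: "V \<ge> 64 \<Longrightarrow> (3::nat)^12 * (3^24) ^ V < (2^39) ^ V"
proof -
  assume V: "V \<ge> 64"
  have lt: "(3::nat) * 3^24 < 2 * 2^39" by simp
  have "(3::nat)^12 * (3^24) ^ V * 2^V = (3^12 * 2^V) * (3^24) ^ V" by (simp add: mult_ac)
  also have "\<dots> \<le> 3^V * (3^24)^V" using pow_ineq[OF V] by (rule mult_right_mono) simp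
  also have "\<dots> = (3 * 3^24)^V" by (rule power_mult_distrib[symmetric])
  also have "\<dots> < (2 * 2^39)^V" using V by (intro power_strict_mono lt) auto
  also have "\<dots> = (2^39)^V * 2^V" unfolding power_mult_distrib by (rule mult.commute)
  finally show ?thesis by simp
qed

lemma arith_final:
  assumes V: "V = 2 * (K + 1)" "V \<ge> 64" and h: "2 ^ (K + 1) * 8 ^ V \<le> 3 * 8 ^ q * (9::nat) ^ V"
  shows "V \<le> 12 * q"
proof (rule ccontr)
  assume "\<not> V \<le> 12 * q"
  then have q: "36 * q \<le> 3 * V" by simp
  have H1: "(2 ^ (K + 1) * 8 ^ V) ^ 12 \<le> (3 * 8 ^ q * (9::nat) ^ V) ^ 12"
    using h by (rule power_mono) simp
  have H2: "(2 ^ (K + 1) * 8 ^ V) ^ 12 = (2::nat) ^ (42 * V)"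
  proof -
    have e8: "(8::nat) ^ V = 2 ^ (3 * V)" by (simp add: power_mult)
    have "(2 ^ (K + 1) * 8 ^ V) ^ 12 = ((2::nat) ^ (K + 1 + 3 * V)) ^ 12" by (simp only: e8 power_add)
    also have "\<dots> = 2 ^ ((K + 1 + 3 * V) * 12)" by (rule power_mult[symmetric])
    also have "(K + 1 + 3 * V) * 12 = 42 * V" using V(1) by simp
    finally show ?thesis .
  qed
  have H3: "(3 * 8 ^ q * (9::nat) ^ V) ^ 12 = 3 ^ 12 * 2 ^ (36 * q) * 3 ^ (24 * V)"
  proof -
    have a: "(8::nat) ^ (q * 12) = 2 ^ (36 * q)"
    proof -
      have "(8::nat) ^ (q * 12) = (2 ^ 3) ^ (q * 12)" by simp
      also have "\<dots> = 2 ^ (3 * (q * 12))" by (rule power_mult[symmetric])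
      also have "3 * (q * 12) = 36 * q" by simp
      finally show ?thesis .
    qed
    have b: "(9::nat) ^ (V * 12) = 3 ^ (24 * V)"
    proof -
      have "(9::nat) ^ (V * 12) = (3 ^ 2) ^ (V * 12)" by simp
      also have "\<dots> = 3 ^ (2 * (V * 12))" by (rule power_mult[symmetric])
      also have "2 * (V * 12) = 24 * V" by simp
      finally show ?thesis .
    qed
    have "(3 * 8 ^ q * (9::nat) ^ V) ^ 12 = 3 ^ 12 * (8 ^ q) ^ 12 * (9 ^ V) ^ 12"
      by (simp only: power_mult_distrib)
    also have "\<dots> = 3 ^ 12 * 8 ^ (q * 12) * 9 ^ (V * 12)" by (simp only: power_mult)
    also have "\<dots> = 3 ^ 12 * 2 ^ (36 * q) * 3 ^ (24 * V)" by (simp only: a b)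
    finally show ?thesis .
  qed
  have H4: "(2::nat) ^ (36 * q) \<le> 2 ^ (3 * V)" using q by (rule power_increasing) simp
  have "(2::nat) ^ (42 * V) \<le> 3 ^ 12 * 2 ^ (36 * q) * 3 ^ (24 * V)" using H1 H2 H3 by simp
  also have "\<dots> \<le> 3 ^ 12 * 2 ^ (3 * V) * 3 ^ (24 * V)"
    using H4 by (intro mult_right_mono mult_left_mono) auto
  finally have H5: "(2::nat) ^ (42 * V) \<le> 3 ^ 12 * 2 ^ (3 * V) * 3 ^ (24 * V)" .
  have H6: "(2::nat) ^ (42 * V) = 2 ^ (3 * V) * (2^39) ^ V"
  proof -
    have "(2::nat) ^ (42 * V) = 2 ^ (3 * V + 39 * V)" by simp
    also have "\<dots> = 2 ^ (3 * V) * 2 ^ (39 * V)" by (rule power_add)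
    also have "(2::nat) ^ (39 * V) = (2^39) ^ V" by (rule power_mult)
    finally show ?thesis .
  qed
  have H7: "(3::nat) ^ (24 * V) = (3^24) ^ V" by (rule power_mult)
  have "2 ^ (3 * V) * (2^39) ^ V \<le> 2 ^ (3 * V) * ((3::nat)^12 * (3^24) ^ V)"
    using H5 unfolding H6 H7 by (simp only: mult_ac)
  then have "(2^39) ^ V \<le> (3::nat)^12 * (3^24) ^ V" using mult_le_cancel1[of "2 ^ (3 * V)" "(2^39) ^ V" "(3::nat)^12 * (3^24) ^ V"] by simp
  then show False using big_ineq[OF V(2)] by linarith
qed

lemma nrm_init:
  assumes "M \<ge> 1" "d \<ge> 1"
  shows "nrm (qbasis_set n M d) (init_state n) = 1"
proof -
  let ?s0 = "(replicate n False, 0::nat, 0::nat)"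
  have s0: "?s0 \<in> qbasis_set n M d" using assms unfolding qbasis_set_def pow_carrier_def by auto
  have "nrm (qbasis_set n M d) (init_state n) = (\<Sum>s\<in>qbasis_set n M d. if s = ?s0 then 1 else 0)"
    unfolding nrm_def init_state_def by (intro sum.cong refl) auto
  also have "\<dots> = 1" using s0 finite_qbasis by (simp add: sum.delta')
  finally show ?thesis .
qed

definition Xset :: "nat \<Rightarrow> (bool list \<Rightarrow> bool) set" where
  "Xset n = fZ n ` Pow (Iset n)"

lemma Xset_props:
  assumes "n \<ge> 1"
  shows "finite (Xset n)" "card (Xset n) = 2 ^ (2 ^ (n - 1) - 1)" "\<And>x. x \<in> Xset n \<Longrightarrow> goodx n x"
proof -
  show "finite (Xset n)" unfolding Xset_def using finite_Iset by simp
  show "card (Xset n) = 2 ^ (2 ^ (n - 1) - 1)" unfolding Xset_def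
    using card_image[OF inj_fZ[OF assms]] card_Pow[OF finite_Iset[of n]] card_Iset[of n] by simp
  show "goodx n x" if "x \<in> Xset n" for x using that goodx_fZ[OF assms] unfolding Xset_def by auto
qed

lemma inj_ker:
  assumes "\<And>x. x \<in> X \<Longrightarrow> goodx n x"
  shows "inj_on (\<lambda>x. ker_on (pow_carrier n) (phix x)) X"
  using ker_inj assms by (auto simp: inj_on_def)

lemma classical_bound:
  assumes U: "Clo_eq_U ar opB" and n: "n \<ge> 1" and M: "M \<ge> 2"
    and sol: "solves_hkp_classical ar opB n M q R"
  shows "2 * card (Xset n) \<le> 3 * 2 ^ q"
proof -
  let ?X = "Xset n"
  let ?p = "R {0,1} (opC2 opB)"
  let ?tgt = "\<lambda>x. ker_on (pow_carrier n) (phix x)"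
  note XP = Xset_props[OF n]
  have inst: "hkp_instance ar opB n M {0,1} (opC2 opB) (phix x)" if "x \<in> ?X" for x
    by (rule instance_ok[OF U XP(3)[OF that] M])
  have nq: "nqueries (phix x) t \<le> q" if "x \<in> ?X" "t \<in> set_pmf ?p" for x t
    using sol inst[OF that(1)] that(2) unfolding solves_hkp_classical_def by blast
  have pr: "measure_pmf.prob ?p {t. run_tree (phix x) t = ?tgt x} \<ge> 2/3" if "x \<in> ?X" for x
    using sol inst[OF that] unfolding solves_hkp_classical_def by blast
  have "(\<Sum>x\<in>?X. measure_pmf.prob ?p {t. run_tree (phix x) t = ?tgt x}) \<le> 2 ^ q"
    by (rule prob_sum_bound[OF XP(1) _ nq inj_ker[OF XP(3)]]) (auto simp: phix_def)
  moreover have "(\<Sum>x\<in>?X. (2/3::real)) \<le> (\<Sum>x\<in>?X. measure_pmf.prob ?p {t. run_tree (phix x) t = ?tgt x})"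
    by (rule sum_mono) (rule pr)
  ultimately have "real (card ?X) * (2/3) \<le> 2 ^ q" by simp
  then have "real (2 * card ?X) \<le> real (3 * 2 ^ q)" by simp
  then show ?thesis by (simp only: of_nat_le_iff)
qed

lemma quantum_bound:
  assumes U: "Clo_eq_U ar opB" and n: "n \<ge> 1" and M: "M \<ge> 2"
    and sol: "solves_hkp_quantum ar opB n M q Q"
  shows "2 * card (Xset n) \<le> 3 * card (Ts (pow_carrier n) q)"
proof -
  let ?X = "Xset n"
  let ?A = "pow_carrier n"
  let ?tgt = "\<lambda>x. ker_on (pow_carrier n) (phix x)"
  note XP = Xset_props[OF n]
  have A: "finite ?A" by (rule finite_pow_carrier)
  obtain d Us out where Qd: "Q {0,1} (opC2 opB) = (d, Us, out)" by (cases "Q {0,1} (opC2 opB)") auto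
  have inst: "hkp_instance ar opB n M {0,1} (opC2 opB) (phix x)" if "x \<in> ?X" for x
    by (rule instance_ok[OF U XP(3)[OF that] M])
  obtain x0 where x0: "x0 \<in> ?X" unfolding Xset_def by blast
  have wf: "qalg_wf n M q (d, Us, out)" using sol inst[OF x0] Qd unfolding solves_hkp_quantum_def by metis
  then have d: "d \<ge> 1" and len: "length Us = Suc q" and unit: "\<forall>U\<in>set Us. unitary_on (qbasis_set n M d) U"
    unfolding qalg_wf_def by auto
  define S where "S = qbasis_set n M d"
  have S: "finite S" unfolding S_def by (rule finite_qbasis)
  define \<psi> where "\<psi> x = qrun S M (phix x) Us (init_state n)" for x
  have succ: "qsuccess n M (d, Us, out) (phix x) (?tgt x) \<ge> 2/3" if "x \<in> ?X" for x
    using sol inst[OF that] Qd unfolding solves_hkp_quantum_def by metis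
  have succ_eq: "qsuccess n M (d, Us, out) (phix x) (?tgt x) = (\<Sum>s\<in>{s\<in>S. out s = ?tgt x}. (cmod (\<psi> x s))\<^sup>2)" for x
    unfolding qsuccess_def S_def \<psi>_def Let_def by simp
  have nrm1: "nrm S (\<psi> x) \<le> 1" for x
    unfolding \<psi>_def S_def using qrun_norm[of M Us n d "phix x" "init_state n"] unit nrm_init[of M d n] M d by simp
  have pol: "polyk ?A ?X q (\<lambda>x. \<psi> x s)" for s
  proof -
    have "polyk ?A ?X (0 + (length Us - 1)) (\<lambda>x. qrun S M (phix x) Us (init_state n) s)"
    proof (rule polyk_qrun[OF A S M])
      show "a \<in> ?A" if "x \<in> ?X" "x a" for x a using XP(3)[OF that(1)] that(2) unfolding goodx_def by blast
      show "polyk ?A ?X 0 (\<lambda>x. init_state n s')" for s' by (rule polyk_const[OF A])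
    qed
    then show ?thesis using len unfolding \<psi>_def by simp
  qed
  have "\<forall>s. \<exists>c. \<forall>x\<in>?X. \<psi> x s = (\<Sum>T\<in>Ts ?A q. c T * mon T x)"
    using pol unfolding polyk_def by blast
  then obtain cf where cf: "\<And>s x. x \<in> ?X \<Longrightarrow> \<psi> x s = (\<Sum>T\<in>Ts ?A q. cf s T * mon T x)"
    by metis
  obtain m e where me: "m \<le> card (Ts ?A q)" "orthonormal S m e"
      "\<forall>T\<in>Ts ?A q. inspan S m e (\<lambda>s. cf s T)"
    using gram_schmidt[OF S finite_Ts[OF A], where \<alpha>="\<lambda>T s. cf s T"] by blast
  have "\<forall>T\<in>Ts ?A q. \<exists>\<beta>. \<forall>s\<in>S. cf s T = (\<Sum>k<m. \<beta> k * e k s)"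
    using me(3) unfolding inspan_def by blast
  then obtain bt where bt: "\<And>T s. T \<in> Ts ?A q \<Longrightarrow> s \<in> S \<Longrightarrow> cf s T = (\<Sum>k<m. bt T k * e k s)"
    by metis
  define \<beta> where "\<beta> x k = (\<Sum>T\<in>Ts ?A q. mon T x * bt T k)" for x k
  have rep: "\<psi> x s = (\<Sum>k<m. \<beta> x k * e k s)" if x: "x \<in> ?X" and s: "s \<in> S" for x s
  proof -
    have "\<psi> x s = (\<Sum>T\<in>Ts ?A q. mon T x * (\<Sum>k<m. bt T k * e k s))"
      using cf[OF x] bt[OF _ s] by (simp add: mult.commute)
    also have "\<dots> = (\<Sum>T\<in>Ts ?A q. \<Sum>k<m. mon T x * bt T k * e k s)"
      by (simp add: sum_distrib_left mult.assoc)
    also have "\<dots> = (\<Sum>k<m. \<Sum>T\<in>Ts ?A q. mon T x * bt T k * e k s)"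
      by (rule sum.swap)
    also have "\<dots> = (\<Sum>k<m. \<beta> x k * e k s)"
      unfolding \<beta>_def sum_distrib_right by simp
    finally show ?thesis .
  qed
  have "(\<Sum>x\<in>?X. \<Sum>s\<in>{s\<in>S. out s = ?tgt x}. (cmod (\<psi> x s))\<^sup>2) \<le> real m"
    by (rule success_bound[OF S XP(1) me(2) rep nrm1 inj_ker[OF XP(3)]])
  moreover have "(\<Sum>x\<in>?X. (2/3::real)) \<le> (\<Sum>x\<in>?X. \<Sum>s\<in>{s\<in>S. out s = ?tgt x}. (cmod (\<psi> x s))\<^sup>2)"
    by (rule sum_mono) (use succ succ_eq in simp)
  ultimately have "real (card ?X) * (2/3) \<le> real (card (Ts ?A q))" using me(1) by simp
  then have "real (2 * card ?X) \<le> real (3 * card (Ts ?A q))" by simp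
  then show ?thesis by (simp only: of_nat_le_iff)
qed

theorem lemma5p7:
  fixes ar :: "'i \<Rightarrow> nat" and opB :: "'i \<Rightarrow> bool list \<Rightarrow> bool"
  assumes "Clo_eq_U ar opB"
  shows "\<exists>c>0. \<exists>N0. \<forall>n\<ge>N0. \<forall>M\<ge>2. \<forall>q.
           ((\<exists>R. solves_hkp_classical ar opB n M q R) \<or> (\<exists>Q. solves_hkp_quantum ar opB n M q Q))
           \<longrightarrow> c * 2 ^ n \<le> real q"
proof (intro exI[of _ "1/12::real"] conjI exI[of _ "6::nat"] allI impI)
  show "(0::real) < 1/12" by simp
next
  fix n M q :: nat
  assume n6: "6 \<le> n" and M: "2 \<le> M"
    and sol: "(\<exists>R. solves_hkp_classical ar opB n M q R) \<or> (\<exists>Q. solves_hkp_quantum ar opB n M q Q)"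
  have n: "n \<ge> 1" using n6 by simp
  define K where "K = 2 ^ (n - 1) - (1::nat)"
  define V where "V = (2::nat) ^ n"
  have p1: "(2::nat) ^ (n - 1) \<ge> 1" by simp
  have V2: "V = 2 * (K + 1)"
  proof -
    have "V = 2 * 2 ^ (n - 1)" unfolding V_def using n by (cases n) auto
    then show ?thesis unfolding K_def using p1 by simp
  qed
  have V64: "V \<ge> 64"
  proof -
    have "(2::nat) ^ 6 \<le> 2 ^ n" using n6 by (rule power_increasing) simp
    then show ?thesis unfolding V_def by simp
  qed
  have cX: "card (Xset n) = 2 ^ K" unfolding K_def using Xset_props(2)[OF n] .
  have "V \<le> 12 * q"
    using sol
  proof
    assume "\<exists>R. solves_hkp_classical ar opB n M q R"
    then obtain R where R: "solves_hkp_classical ar opB n M q R" by blast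
    have "2 * 2 ^ K \<le> 3 * (2::nat) ^ q" using classical_bound[OF assms n M R] cX by simp
    also have "\<dots> < 4 * 2 ^ q" by simp
    finally have "(2::nat) ^ (K + 1) < 2 ^ (q + 2)" by (simp add: power_add mult.commute)
    then have "K + 1 < q + 2" by (rule power_less_imp_less_exp[rotated]) simp
    then show "V \<le> 12 * q" using V2 V64 by presburger
  next
    assume "\<exists>Q. solves_hkp_quantum ar opB n M q Q"
    then obtain Q where Q: "solves_hkp_quantum ar opB n M q Q" by blast
    have h1: "2 * 2 ^ K \<le> 3 * card (Ts (pow_carrier n) q)" using quantum_bound[OF assms n M Q] cX by simp
    have h2: "8 ^ V * card (Ts (pow_carrier n) q) \<le> 8 ^ q * 9 ^ V"
      using card_Ts_bound[OF finite_pow_carrier, of n q] unfolding card_pow_carrier V_def .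
    have "2 ^ (K + 1) * 8 ^ V = (2 * 2 ^ K) * (8::nat) ^ V" by simp
    also have "\<dots> \<le> (3 * card (Ts (pow_carrier n) q)) * 8 ^ V" using h1 by (rule mult_right_mono) simp
    also have "\<dots> = 3 * (8 ^ V * card (Ts (pow_carrier n) q))" by simp
    also have "\<dots> \<le> 3 * (8 ^ q * 9 ^ V)" using h2 by simp
    finally have "2 ^ (K + 1) * 8 ^ V \<le> 3 * 8 ^ q * (9::nat) ^ V" by (simp add: mult.assoc)
    then show "V \<le> 12 * q" by (rule arith_final[OF V2 V64])
  qed
  then have "real V \<le> 12 * real q" by linarith
  then show "1 / 12 * 2 ^ n \<le> real q" unfolding V_def by simp
qed

end
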